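(* Let $\mathcal{H}$ be a separable infinite-dimensional complex Hilbert space, let $T\in\mathscr{B}(\mathcal{H})$ have dense range and let $\varepsilon>0$. Then the map $x_0\mapsto\|y_{x_0,\varepsilon}\|$ is continuous on the open set $\{x_0\in\mathcal{H}:\|x_0\|>\varepsilon\}$.
   Context: For $T\in\mathscr{B}(\mathcal{H})$ with dense range, $x_0\neq 0$ and $0<\varepsilon<\|x_0\|$, the extremal vector $y_{x_0,\varepsilon}$ is the unique vector $y_0\in\mathcal{H}$ with $\|Ty_0-x_0\|\leqslant\varepsilon$ and $\|y_0\|=\inf\{\|y\|:\|Ty-x_0\|\leqslant\varepsilon\}$. *)

theory Defs
  imports "HOL-Analysis.Analysis"
begin

text \<open>A complex Hilbert space is modelled as a real Hilbert space (type class
  real_inner + complete_space) together with a complex structure J (multiplication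
  by the imaginary unit): J is real-linear, J (J x) = - x, and J preserves the
  inner product, so that  (a + i b) x = a x + b J x  and the complex inner product
  <x,y>_C = x . y + i (x . J y)  (up to convention).\<close>

definition complex_structure :: "('a::real_inner \<Rightarrow> 'a) \<Rightarrow> bool" where
  "complex_structure J \<longleftrightarrow> linear J \<and> (\<forall>x. J (J x) = - x) \<and> (\<forall>x y. inner (J x) (J y) = inner x y)"

definition complex_bounded_operator :: "('a::real_inner \<Rightarrow> 'a) \<Rightarrow> ('a \<Rightarrow> 'a) \<Rightarrow> bool" where
  "complex_bounded_operator J T \<longleftrightarrow> bounded_linear T \<and> (\<forall>x. T (J x) = J (T x))"

text \<open>Infinite-dimensional: no finite set spans the whole space (real span; the
  space is infinite-dimensional over the complex numbers iff over the reals).\<close>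
definition infinite_dimensional :: "'a::real_vector itself \<Rightarrow> bool" where
  "infinite_dimensional _ \<longleftrightarrow> (\<forall>S::'a set. finite S \<longrightarrow> span S \<noteq> UNIV)"

definition extremal_vector :: "('a::real_normed_vector \<Rightarrow> 'a) \<Rightarrow> 'a \<Rightarrow> real \<Rightarrow> 'a" where
  "extremal_vector T x0 \<epsilon> =
     (THE y0. norm (T y0 - x0) \<le> \<epsilon> \<and> norm y0 = Inf {norm y | y. norm (T y - x0) \<le> \<epsilon>})"

end

theory Submission
  imports Defs
begin

lemma para_law:
  fixes a b :: "'a::real_inner"
  shows "norm (a - b)^2 = 2*norm a^2 + 2*norm b^2 - norm (a+b)^2"
  by (simp add: power2_norm_eq_inner inner_diff_left inner_diff_right inner_add_left inner_add_right inner_commute algebra_simps)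

lemma min_norm_unique:
  fixes C :: "'a::real_inner set"
  assumes "convex C" "y1 \<in> C" "y2 \<in> C" "norm y1 = m" "norm y2 = m" "\<And>z. z \<in> C \<Longrightarrow> m \<le> norm z"
  shows "y1 = y2"
proof -
  have M: "(1/2) *\<^sub>R y1 + (1/2) *\<^sub>R y2 \<in> C"
    using convexD[OF assms(1,2,3)] by simp
  have "(1/2) *\<^sub>R y1 + (1/2) *\<^sub>R y2 = (1/2) *\<^sub>R (y1 + y2)" by (simp add: scaleR_add_right)
  hence "m \<le> norm (y1 + y2) / 2" using assms(6)[OF M] by simp
  moreover have "0 \<le> m" using assms(4) by auto
  ultimately have "2*m \<le> norm (y1+y2)" by simp
  hence "(2*m)^2 \<le> norm (y1+y2)^2" using \<open>0 \<le> m\<close> by (intro power_mono) auto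
  hence "norm (y1 - y2)^2 \<le> 0" using para_law[of y1 y2] assms(4,5) by (simp add: power2_eq_square)
  thus ?thesis by simp
qed

lemma min_norm_exists:
  fixes C :: "'a::{real_inner,complete_space} set"
  assumes cl: "closed C" and cv: "convex C" and ne: "C \<noteq> {}"
  shows "\<exists>y\<in>C. norm y = Inf (norm ` C)"
proof -
  define m where "m = Inf (norm ` C)"
  have bdd: "bdd_below (norm ` C)" by (rule bdd_belowI[of _ 0]) auto
  have lower: "m \<le> norm z" if "z \<in> C" for z
    unfolding m_def using bdd that by (intro cInf_lower) auto
  have m0: "0 \<le> m" unfolding m_def using ne by (intro cInf_greatest) auto
  have "\<exists>y\<in>C. norm y < m + 1 / real (Suc n)" for n
  proof -
    have "Inf (norm ` C) < m + 1 / real (Suc n)" unfolding m_def by simp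
    then show ?thesis using cInf_less_iff[of "norm ` C"] ne bdd by auto
  qed
  then obtain y where yC: "\<And>n. y n \<in> C" and yn: "\<And>n. norm (y n) < m + 1 / real (Suc n)"
    by metis
  define K where "K = 4*m + 2"
  have K0: "0 \<le> K" using m0 unfolding K_def by simp
  have sq: "norm (y n)^2 \<le> m^2 + (2*m+1) * (1 / real (Suc n))" for n
  proof -
    define \<alpha> where "\<alpha> = 1 / real (Suc n)"
    have a0: "0 \<le> \<alpha>" and a1: "\<alpha> \<le> 1" unfolding \<alpha>_def by (auto simp: field_simps)
    have "norm (y n)^2 \<le> (m + \<alpha>)^2" using yn[of n] unfolding \<alpha>_def
      by (intro power_mono) auto
    also have "\<dots> = m^2 + 2*m*\<alpha> + \<alpha>*\<alpha>" by (simp add: power2_eq_square algebra_simps)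
    also have "\<dots> \<le> m^2 + 2*m*\<alpha> + \<alpha>" using a0 a1 by (simp add: mult_left_le)
    finally show ?thesis unfolding \<alpha>_def by (simp add: algebra_simps)
  qed
  have key: "norm (y i - y j)^2 \<le> K * (1 / real (Suc i) + 1 / real (Suc j))" for i j
  proof -
    have M: "(1/2) *\<^sub>R y i + (1/2) *\<^sub>R y j \<in> C"
      using convexD[OF cv yC yC] by simp
    have "(1/2) *\<^sub>R y i + (1/2) *\<^sub>R y j = (1/2) *\<^sub>R (y i + y j)" by (simp add: scaleR_add_right)
    hence "m \<le> norm (y i + y j) / 2" using lower[OF M] by simp
    hence "2*m \<le> norm (y i + y j)" by simp
    hence "(2*m)^2 \<le> norm (y i + y j)^2" using m0 by (intro power_mono) auto
    hence h: "4*m^2 \<le> norm (y i + y j)^2" by (simp add: power_mult_distrib)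
    have e: "K * (1 / real (Suc i) + 1 / real (Suc j)) = (2*m+1) * (1 / real (Suc i)) * 2 + (2*m+1) * (1 / real (Suc j)) * 2"
      unfolding K_def by (simp add: algebra_simps)
    show ?thesis unfolding e using para_law[of "y i" "y j"] sq[of i] sq[of j] h by linarith
  qed
  have "Cauchy y"
  proof (rule metric_CauchyI)
    fix e :: real assume e: "e > 0"
    obtain N where N: "2*K / e^2 < real N" using reals_Archimedean2 by blast
    have "2*K / real (Suc N) < e^2"
    proof -
      have "2*K < real N * e^2" using N e by (simp add: field_simps)
      also have "\<dots> \<le> real (Suc N) * e^2" using e by (intro mult_right_mono) auto
      finally show ?thesis by (simp add: field_simps)
    qed
    show "\<exists>M. \<forall>i\<ge>M. \<forall>j\<ge>M. dist (y i) (y j) < e"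
    proof (intro exI allI impI)
      fix i j assume ij: "N \<le> i" "N \<le> j"
      have "1 / real (Suc i) \<le> 1 / real (Suc N)" "1 / real (Suc j) \<le> 1 / real (Suc N)"
        using ij by (auto intro!: divide_left_mono)
      hence "K * (1 / real (Suc i) + 1 / real (Suc j)) \<le> K * (2 / real (Suc N))"
        using K0 by (intro mult_left_mono) auto
      moreover have "K * (2 / real (Suc N)) = 2*K / real (Suc N)" by simp
      ultimately have "norm (y i - y j)^2 < e^2" using key[of i j] \<open>2*K / real (Suc N) < e^2\<close>
        by linarith
      hence "dist (y i) (y j)^2 < e^2" by (simp add: dist_norm)
      thus "dist (y i) (y j) < e" using e by (meson power_less_imp_less_base less_le)
    qed
  qed
  then obtain L where L: "y \<longlonglongrightarrow> L" using Cauchy_convergent_iff convergent_def by blast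
  have LC: "L \<in> C" using closed_sequentially[OF cl] yC L by blast
  have t1: "(\<lambda>n. norm (y n)) \<longlonglongrightarrow> norm L" using L by (rule tendsto_norm)
  have "(\<lambda>n. m + inverse (real (Suc n))) \<longlonglongrightarrow> m + 0"
    by (intro tendsto_add tendsto_const LIMSEQ_inverse_real_of_nat)
  hence t3: "(\<lambda>n. m + inverse (real (Suc n))) \<longlonglongrightarrow> m" by simp
  have lo: "\<forall>\<^sub>F n in sequentially. m \<le> norm (y n)" using lower yC by (intro always_eventually) blast
  have up: "\<forall>\<^sub>F n in sequentially. norm (y n) \<le> m + inverse (real (Suc n))"
    using yn by (intro always_eventually allI) (simp add: inverse_eq_divide less_imp_le)
  have t2: "(\<lambda>n. norm (y n)) \<longlonglongrightarrow> m"
    by (rule real_tendsto_sandwich[OF lo up tendsto_const t3])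
  have "norm L = m" using LIMSEQ_unique[OF t1 t2] .
  thus ?thesis using LC unfolding m_def by blast
qed

lemma comb_id1:
  fixes x x' :: "'a::real_vector"
  shows "(1-t) *\<^sub>R x + t *\<^sub>R (x + c *\<^sub>R (x' - x)) = x + (t*c) *\<^sub>R (x' - x)"
  by (simp add: algebra_simps)

lemma comb_id2:
  fixes x x' :: "'a::real_vector"
  shows "(1-s) *\<^sub>R x' + s *\<^sub>R (x + c *\<^sub>R (x - x')) = x' + (s*(1+c)) *\<^sub>R (x - x')"
  by (simp add: algebra_simps)

theorem mainTheorem7:
  fixes J T :: "'a::{real_inner, complete_space} \<Rightarrow> 'a" and \<epsilon> :: real
  assumes "complex_structure J"
    and "separable_space (euclidean :: 'a topology)"
    and "infinite_dimensional TYPE('a)"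
    and "complex_bounded_operator J T"
    and "closure (range T) = UNIV"
    and "\<epsilon> > 0"
  shows "continuous_on {x0. norm x0 > \<epsilon>} (\<lambda>x0. norm (extremal_vector T x0 \<epsilon>))"
proof -
  have blT: "bounded_linear T" using assms(4) unfolding complex_bounded_operator_def by simp
  have ep: "\<epsilon> > 0" by fact
  define C where "C x = {y. norm (T y - x) \<le> \<epsilon>}" for x
  define m where "m x = Inf (norm ` C x)" for x
  have dense: "\<exists>y. norm (T y - x) < e" if "e > 0" for x e
  proof -
    have "x \<in> closure (range T)" unfolding assms(5) by (rule UNIV_I)
    from closure_approachable[THEN iffD1, OF this, rule_format, OF that]
    obtain z where z: "z \<in> range T" "dist z x < e" by (elim bexE)
    from z(1) obtain y where zy: "z = T y" by (rule rangeE)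
    have "norm (T y - x) < e" using z(2) unfolding zy dist_norm .
    thus ?thesis by blast
  qed
  have comb: "T (u *\<^sub>R a + v *\<^sub>R b) - (u *\<^sub>R p + v *\<^sub>R q) = u *\<^sub>R (T a - p) + v *\<^sub>R (T b - q)" for u v a b p q
    by (simp add: linear_simps[OF blT] algebra_simps)
  have combn: "norm (T (u *\<^sub>R a + v *\<^sub>R b) - (u *\<^sub>R p + v *\<^sub>R q)) \<le> \<epsilon>"
    if "a \<in> C p" "b \<in> C q" "u \<ge> 0" "v \<ge> 0" "u + v = 1" for u v a b p q
  proof -
    have "norm (T (u *\<^sub>R a + v *\<^sub>R b) - (u *\<^sub>R p + v *\<^sub>R q)) \<le> norm (u *\<^sub>R (T a - p)) + norm (v *\<^sub>R (T b - q))"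
      unfolding comb by (rule norm_triangle_ineq)
    also have "\<dots> = u * norm (T a - p) + v * norm (T b - q)" using that by simp
    also have "\<dots> \<le> u * \<epsilon> + v * \<epsilon>" using that unfolding C_def
      by (intro add_mono mult_left_mono) auto
    also have "\<dots> = (u + v) * \<epsilon>" by (simp add: distrib_right)
    also have "\<dots> = \<epsilon>" using that by simp
    finally show ?thesis .
  qed
  have Cne: "C x \<noteq> {}" for x
  proof -
    obtain y where "norm (T y - x) < \<epsilon>" using dense[OF ep, of x] by blast
    hence "y \<in> C x" unfolding C_def by simp
    thus ?thesis by blast
  qed
  have Ccl: "closed (C x)" for x unfolding C_def
    by (rule closed_Collect_le[OF continuous_on_norm[OF continuous_on_diff[OF linear_continuous_on[OF blT] continuous_on_const]] continuous_on_const])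
  have Ccv: "convex (C x)" for x
  proof (rule convexI)
    fix a b u v assume h: "a \<in> C x" "b \<in> C x" "0 \<le> (u::real)" "0 \<le> v" "u + v = 1"
    have xx: "u *\<^sub>R x + v *\<^sub>R x = x" using h(5) by (metis scaleR_add_left scaleR_one)
    have "norm (T (u *\<^sub>R a + v *\<^sub>R b) - (u *\<^sub>R x + v *\<^sub>R x)) \<le> \<epsilon>"
      by (rule combn[OF h])
    then show "u *\<^sub>R a + v *\<^sub>R b \<in> C x" unfolding xx C_def by simp
  qed
  have bdd: "bdd_below (norm ` C x)" for x by (rule bdd_belowI[of _ 0]) auto
  have lower: "m x \<le> norm z" if "z \<in> C x" for x z
    unfolding m_def using bdd that by (intro cInf_lower) auto
  have m0: "0 \<le> m x" for x unfolding m_def using Cne by (intro cInf_greatest) auto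
  have "\<exists>y\<in>C x. norm y = m x" for x unfolding m_def by (rule min_norm_exists[OF Ccl Ccv Cne])
  then obtain ym where ymC: "\<And>x. ym x \<in> C x" and ymn: "\<And>x. norm (ym x) = m x" by metis
  have extv: "norm (extremal_vector T x \<epsilon>) = m x" for x
  proof -
    have seq: "{norm y | y. norm (T y - x) \<le> \<epsilon>} = norm ` C x" by (auto simp: C_def)
    have ev: "extremal_vector T x \<epsilon> = (THE y0. y0 \<in> C x \<and> norm y0 = m x)"
      unfolding extremal_vector_def seq m_def C_def by simp
    have "\<exists>!y0. y0 \<in> C x \<and> norm y0 = m x"
      using ymC ymn min_norm_unique[OF Ccv, where m="m x"] lower by blast
    from theI'[OF this] show ?thesis unfolding ev by blast
  qed
  have mconv: "m ((1-t) *\<^sub>R a + t *\<^sub>R b) \<le> (1-t) * m a + t * m b" if "0 \<le> t" "t \<le> 1" for t a b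
  proof -
    have "(1-t) *\<^sub>R ym a + t *\<^sub>R ym b \<in> C ((1-t) *\<^sub>R a + t *\<^sub>R b)"
      using combn[OF ymC ymC, of "1-t" t a b] that unfolding C_def by simp
    hence "m ((1-t) *\<^sub>R a + t *\<^sub>R b) \<le> norm ((1-t) *\<^sub>R ym a + t *\<^sub>R ym b)" by (rule lower)
    also have "\<dots> \<le> norm ((1-t) *\<^sub>R ym a) + norm (t *\<^sub>R ym b)" by (rule norm_triangle_ineq)
    also have "\<dots> = (1-t) * m a + t * m b" using that by (simp add: ymn)
    finally show ?thesis .
  qed
  have cont: "isCont m x" for x
  proof -
    define r where "r = \<epsilon> / 2"
    have r0: "r > 0" using ep unfolding r_def by simp
    obtain y1 where y1: "norm (T y1 - x) < r" using dense[OF r0] by blast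
    define B where "B = norm y1"
    have Bb: "m z \<le> B" if "norm (z - x) \<le> r" for z
    proof -
      have e1: "T y1 - z = (T y1 - x) + (x - z)" by simp
      have "norm (T y1 - z) \<le> norm (T y1 - x) + norm (x - z)" unfolding e1 by (rule norm_triangle_ineq)
      hence "norm (T y1 - z) \<le> norm (T y1 - x) + norm (z - x)" by (simp add: norm_minus_commute)
      hence "y1 \<in> C z" using y1 that unfolding C_def r_def by simp
      thus ?thesis unfolding B_def by (rule lower)
    qed
    have B0: "0 \<le> B" using Bb[of x] m0[of x] r0 by simp
    have est: "\<bar>m x' - m x\<bar> \<le> norm (x' - x) * B / r" if "x' \<noteq> x" "norm (x' - x) < r" for x'
    proof -
      define \<delta> where "\<delta> = norm (x' - x)"
      have dn: "norm (x' - x) = \<delta>" unfolding \<delta>_def ..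
      have d0: "\<delta> > 0" using that(1) unfolding \<delta>_def by simp
      have dr: "\<delta> < r" using that(2) unfolding dn .
      define t where "t = \<delta> / r"
      have t01: "0 \<le> t" "t \<le> 1" using d0 r0 dr unfolding t_def by auto
      define w where "w = x + (r / \<delta>) *\<^sub>R (x' - x)"
      have "norm (w - x) = \<bar>r / \<delta>\<bar> * \<delta>" unfolding w_def by (simp add: dn)
      also have "\<dots> = r" using r0 d0 by simp
      finally have wn: "norm (w - x) = r" .
      have "(1-t) *\<^sub>R x + t *\<^sub>R w = x + (t * (r / \<delta>)) *\<^sub>R (x' - x)"
        unfolding w_def by (rule comb_id1)
      also have "t * (r / \<delta>) = 1" unfolding t_def using r0 d0 by simp
      finally have xw: "(1-t) *\<^sub>R x + t *\<^sub>R w = x'" by simp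
      have i: "m x' \<le> m x + t * B"
      proof -
        have "m x' \<le> (1-t) * m x + t * m w" using mconv[OF t01, of x w] unfolding xw .
        moreover have "t * m w \<le> t * B" using Bb[of w] wn t01 by (intro mult_left_mono) auto
        moreover have "0 \<le> t * m x" using t01 m0[of x] by simp
        moreover have "(1-t) * m x = m x - t * m x" by (simp add: algebra_simps)
        ultimately show ?thesis by linarith
      qed
      define s where "s = \<delta> / (r + \<delta>)"
      have s01: "0 \<le> s" "s \<le> 1" using d0 r0 unfolding s_def by auto
      have st: "s \<le> t" unfolding s_def t_def using d0 r0 by (intro divide_left_mono) auto
      define w2 where "w2 = x + (r / \<delta>) *\<^sub>R (x - x')"
      have "norm (w2 - x) = \<bar>r / \<delta>\<bar> * \<delta>" unfolding w2_def by (simp add: dn norm_minus_commute)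
      also have "\<dots> = r" using r0 d0 by simp
      finally have w2n: "norm (w2 - x) = r" .
      have "(1-s) *\<^sub>R x' + s *\<^sub>R w2 = x' + (s * (1 + r / \<delta>)) *\<^sub>R (x - x')"
        unfolding w2_def by (rule comb_id2)
      also have "s * (1 + r / \<delta>) = 1"
      proof -
        have rd: "r + \<delta> \<noteq> 0" using r0 d0 by simp
        have "1 + r / \<delta> = (r + \<delta>) / \<delta>" using d0 by (simp add: field_simps)
        thus ?thesis unfolding s_def using rd d0 by simp
      qed
      finally have xw2: "(1-s) *\<^sub>R x' + s *\<^sub>R w2 = x" by simp
      have ii: "m x \<le> m x' + t * B"
      proof -
        have "m x \<le> (1-s) * m x' + s * m w2" using mconv[OF s01, of x' w2] unfolding xw2 .
        moreover have "s * m w2 \<le> s * B" using Bb[of w2] w2n s01 by (intro mult_left_mono) auto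
        moreover have "s * B \<le> t * B" using st B0 by (intro mult_right_mono) auto
        moreover have "0 \<le> s * m x'" using s01 m0[of x'] by simp
        moreover have "(1-s) * m x' = m x' - s * m x'" by (simp add: algebra_simps)
        ultimately show ?thesis by linarith
      qed
      have "t * B = norm (x' - x) * B / r" unfolding t_def dn by simp
      thus ?thesis using i ii by linarith
    qed
    show ?thesis unfolding isCont_def LIM_eq
    proof (intro allI impI)
      fix e :: real assume e: "e > 0"
      define s where "s = min r (e * r / (B + 1))"
      have s0: "s > 0" unfolding s_def using r0 e B0 by simp
      show "\<exists>s>0. \<forall>x'. x' \<noteq> x \<and> norm (x' - x) < s \<longrightarrow> norm (m x' - m x) < e"
      proof (intro exI[of _ s] conjI s0 allI impI)
        fix x' assume h: "x' \<noteq> x \<and> norm (x' - x) < s"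
        hence h1: "norm (x' - x) < r" "norm (x' - x) < e * r / (B + 1)" unfolding s_def by auto
        have "norm (x' - x) * B / r \<le> (e * r / (B + 1)) * B / r"
          using h1 B0 r0 by (intro divide_right_mono mult_right_mono) auto
        also have "\<dots> = e * (B / (B + 1))" using r0 B0 by (simp add: field_simps add_nonneg_eq_0_iff)
        also have "\<dots> < e" using e B0 by (simp add: field_simps)
        finally show "norm (m x' - m x) < e" using est[of x'] h h1 by simp
      qed
    qed
  qed
  have contm: "continuous_on {x0. norm x0 > \<epsilon>} m"
    using cont by (simp add: continuous_at_imp_continuous_on)
  have eq: "(\<lambda>x0. norm (extremal_vector T x0 \<epsilon>)) = m" by (rule ext) (rule extv)
  show ?thesis unfolding eq by (rule contm)
qed

end
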